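(* Let $f:X\to Y$ and $g:X'\to Y'$ be morphisms in $\mathcal{C}_{\mathcal{I}}^J(\mathcal{P}(\Lambda))$ such that $f$ is isomorphic to $g$ in $\mathcal{K}_{\mathcal{I}}^J(\mathcal{P}(\Lambda))$, i.e. there are isomorphisms $\alpha:X\to X'$ and $\beta:Y\to Y'$ in $\mathcal{K}_{\mathcal{I}}^J(\mathcal{P}(\Lambda))$ with $[g]\alpha=\beta[f]$. Then: (a) if $f$ is smonic, then $g$ is smonic; (b) if $f$ is sepic, then $g$ is sepic; (c) if $f$ and $g$ are irreducible and $f$ is sirreducible, then $g$ is sirreducible.
   Context: $\Lambda$ is a finite-dimensional non-semisimple algebra over a field $k$, $\mathcal{P}(\Lambda)$ the category of finitely generated projective right $\Lambda$-modules; $\mathcal{I}$ is the ideal of radical morphisms (those whose image lies in the radical of the target). For an interval $J\subseteq\mathbb{Z}$, $\mathcal{C}_{\mathcal{I}}^J(\mathcal{P}(\Lambda))$ is the category of cochain complexes of finitely generated projective $\Lambda$-modules vanishing outside $J$ with radical differentials, and $\mathcal{K}_{\mathcal{I}}^J(\mathcal{P}(\Lambda))$ its homotopy category; $[f]$ denotes the homotopy class of $f$. A morphism of complexes $f=(f^n)$ is smonic if all $f^n$ are split monomorphisms, sepic if all $f^n$ are split epimorphisms, and sirreducible if there is exactly one index $i_0$ with $f^{i_0}$ irreducible in $\mathcal{P}(\Lambda)$, $f^n$ a split epimorphism for $n<i_0$ and a split monomorphism for $n>i_0$. *)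

theory Defs
  imports "Jordan_Normal_Form.Matrix"
begin

definition fd_algebra :: "('k::field \<Rightarrow> 'a::ring_1) \<Rightarrow> bool" where
  "fd_algebra emb \<longleftrightarrow>
     emb 1 = 1 \<and> (\<forall>c d. emb (c + d) = emb c + emb d) \<and> (\<forall>c d. emb (c * d) = emb c * emb d)
     \<and> (\<forall>c x. emb c * x = x * emb c)
     \<and> (\<exists>bs :: 'a list. \<forall>x. \<exists>cs :: 'k list. length cs = length bs \<and>
            x = (\<Sum>i<length bs. emb (cs ! i) * bs ! i))"

text \<open>A f.g. projective right Lambda-module is modelled (up to isomorphism) as
  e Lambda^n for an idempotent n x n matrix e; elements are column vectors, Lambda
  acts on the right entrywise, and morphisms e Lambda^n \<rightarrow> e' Lambda^m are m x n
  matrices A with e' A = A = A e, acting by left multiplication.\<close>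

type_synonym 'a pobj = "nat \<times> 'a mat"

definition pobj :: "'a::ring_1 pobj \<Rightarrow> bool" where
  "pobj X \<longleftrightarrow> snd X \<in> carrier_mat (fst X) (fst X) \<and> snd X * snd X = snd X"

definition pmod :: "'a::ring_1 pobj \<Rightarrow> 'a vec set" where
  "pmod X = {v \<in> carrier_vec (fst X). snd X *\<^sub>v v = v}"

definition rsmult :: "'a::ring_1 vec \<Rightarrow> 'a \<Rightarrow> 'a vec" where
  "rsmult v c = map_vec (\<lambda>x. x * c) v"

definition psub :: "'a::ring_1 pobj \<Rightarrow> 'a vec set \<Rightarrow> bool" where
  "psub X U \<longleftrightarrow> U \<subseteq> pmod X \<and> 0\<^sub>v (fst X) \<in> U \<and> (\<forall>u\<in>U. \<forall>w\<in>U. u + w \<in> U)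
      \<and> (\<forall>u\<in>U. \<forall>c. rsmult u c \<in> U)"

definition pmaxsub :: "'a::ring_1 pobj \<Rightarrow> 'a vec set \<Rightarrow> bool" where
  "pmaxsub X U \<longleftrightarrow> psub X U \<and> U \<noteq> pmod X \<and>
      (\<forall>W. psub X W \<and> U \<subseteq> W \<longrightarrow> W = U \<or> W = pmod X)"

definition prad :: "'a::ring_1 pobj \<Rightarrow> 'a vec set" where
  "prad X = pmod X \<inter> \<Inter> {U. pmaxsub X U}"

definition phom :: "'a::ring_1 pobj \<Rightarrow> 'a pobj \<Rightarrow> 'a mat \<Rightarrow> bool" where
  "phom X Y A \<longleftrightarrow> pobj X \<and> pobj Y \<and> A \<in> carrier_mat (fst Y) (fst X)
      \<and> snd Y * A = A \<and> A * snd X = A"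

text \<open>Radical morphisms (the ideal I): image contained in the radical of the target.\<close>
definition pradhom :: "'a::ring_1 pobj \<Rightarrow> 'a pobj \<Rightarrow> 'a mat \<Rightarrow> bool" where
  "pradhom X Y A \<longleftrightarrow> phom X Y A \<and> (\<forall>v\<in>pmod X. A *\<^sub>v v \<in> prad Y)"

definition psplit_mono :: "'a::ring_1 pobj \<Rightarrow> 'a pobj \<Rightarrow> 'a mat \<Rightarrow> bool" where
  "psplit_mono X Y A \<longleftrightarrow> phom X Y A \<and> (\<exists>B. phom Y X B \<and> B * A = snd X)"

definition psplit_epi :: "'a::ring_1 pobj \<Rightarrow> 'a pobj \<Rightarrow> 'a mat \<Rightarrow> bool" where
  "psplit_epi X Y A \<longleftrightarrow> phom X Y A \<and> (\<exists>B. phom Y X B \<and> A * B = snd Y)"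

definition pirr :: "'a::ring_1 pobj \<Rightarrow> 'a pobj \<Rightarrow> 'a mat \<Rightarrow> bool" where
  "pirr X Y A \<longleftrightarrow> phom X Y A \<and> \<not> psplit_mono X Y A \<and> \<not> psplit_epi X Y A \<and>
     (\<forall>Z g h. phom X Z g \<and> phom Z Y h \<and> A = h * g \<longrightarrow> psplit_mono X Z g \<or> psplit_epi Z Y h)"

text \<open>Lambda non-semisimple: the radical of Lambda_Lambda is nonzero.\<close>
definition fd_nonss_algebra :: "('k::field \<Rightarrow> 'a::ring_1) \<Rightarrow> bool" where
  "fd_nonss_algebra emb \<longleftrightarrow> fd_algebra emb \<and>
     (\<exists>v \<in> prad (1, 1\<^sub>m 1 :: 'a mat). v \<noteq> 0\<^sub>v 1)"

definition interval :: "int set \<Rightarrow> bool" where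
  "interval J \<longleftrightarrow> (\<forall>a b c. a \<in> J \<longrightarrow> c \<in> J \<longrightarrow> a \<le> b \<longrightarrow> b \<le> c \<longrightarrow> b \<in> J)"

type_synonym 'a cplx = "(int \<Rightarrow> 'a pobj) \<times> (int \<Rightarrow> 'a mat)"

definition cplx :: "int set \<Rightarrow> 'a::ring_1 cplx \<Rightarrow> bool" where
  "cplx J C \<longleftrightarrow>
     (\<forall>n. pradhom (fst C n) (fst C (n + 1)) (snd C n))
     \<and> (\<forall>n. snd C (n + 1) * snd C n = 0\<^sub>m (fst (fst C (n + 2))) (fst (fst C n)))
     \<and> (\<forall>n. n \<notin> J \<longrightarrow> pmod (fst C n) = {0\<^sub>v (fst (fst C n))})"

definition cmor :: "int set \<Rightarrow> 'a::ring_1 cplx \<Rightarrow> 'a cplx \<Rightarrow> (int \<Rightarrow> 'a mat) \<Rightarrow> bool" where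
  "cmor J C D f \<longleftrightarrow> cplx J C \<and> cplx J D \<and>
     (\<forall>n. phom (fst C n) (fst D n) (f n)) \<and> (\<forall>n. snd D n * f n = f (n + 1) * snd C n)"

definition ccomp :: "(int \<Rightarrow> 'a::ring_1 mat) \<Rightarrow> (int \<Rightarrow> 'a mat) \<Rightarrow> int \<Rightarrow> 'a mat" where
  "ccomp g f = (\<lambda>n. g n * f n)"

definition cid :: "'a::ring_1 cplx \<Rightarrow> int \<Rightarrow> 'a mat" where
  "cid C = (\<lambda>n. snd (fst C n))"

definition htpc :: "'a::ring_1 cplx \<Rightarrow> 'a cplx \<Rightarrow> (int \<Rightarrow> 'a mat) \<Rightarrow> (int \<Rightarrow> 'a mat) \<Rightarrow> bool" where
  "htpc C D f g \<longleftrightarrow> (\<exists>s. (\<forall>n. phom (fst C n) (fst D (n - 1)) (s n)) \<and>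
      (\<forall>n. f n - g n = snd D (n - 1) * s n + s (n + 1) * snd C n))"

definition kiso :: "int set \<Rightarrow> 'a::ring_1 cplx \<Rightarrow> 'a cplx \<Rightarrow> (int \<Rightarrow> 'a mat) \<Rightarrow> bool" where
  "kiso J C D a \<longleftrightarrow> cmor J C D a \<and> (\<exists>b. cmor J D C b \<and>
      htpc C C (ccomp b a) (cid C) \<and> htpc D D (ccomp a b) (cid D))"

definition csplit_mono :: "int set \<Rightarrow> 'a::ring_1 cplx \<Rightarrow> 'a cplx \<Rightarrow> (int \<Rightarrow> 'a mat) \<Rightarrow> bool" where
  "csplit_mono J C D f \<longleftrightarrow> cmor J C D f \<and> (\<exists>r. cmor J D C r \<and> ccomp r f = cid C)"

definition csplit_epi :: "int set \<Rightarrow> 'a::ring_1 cplx \<Rightarrow> 'a cplx \<Rightarrow> (int \<Rightarrow> 'a mat) \<Rightarrow> bool" where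
  "csplit_epi J C D f \<longleftrightarrow> cmor J C D f \<and> (\<exists>r. cmor J D C r \<and> ccomp f r = cid D)"

definition cirr :: "int set \<Rightarrow> 'a::ring_1 cplx \<Rightarrow> 'a cplx \<Rightarrow> (int \<Rightarrow> 'a mat) \<Rightarrow> bool" where
  "cirr J C D f \<longleftrightarrow> cmor J C D f \<and> \<not> csplit_mono J C D f \<and> \<not> csplit_epi J C D f \<and>
     (\<forall>E g h. cmor J C E g \<and> cmor J E D h \<and> f = ccomp h g \<longrightarrow>
        csplit_mono J C E g \<or> csplit_epi J E D h)"

definition smonic :: "'a::ring_1 cplx \<Rightarrow> 'a cplx \<Rightarrow> (int \<Rightarrow> 'a mat) \<Rightarrow> bool" where
  "smonic C D f \<longleftrightarrow> (\<forall>n. psplit_mono (fst C n) (fst D n) (f n))"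

definition sepic :: "'a::ring_1 cplx \<Rightarrow> 'a cplx \<Rightarrow> (int \<Rightarrow> 'a mat) \<Rightarrow> bool" where
  "sepic C D f \<longleftrightarrow> (\<forall>n. psplit_epi (fst C n) (fst D n) (f n))"

definition sirreducible :: "'a::ring_1 cplx \<Rightarrow> 'a cplx \<Rightarrow> (int \<Rightarrow> 'a mat) \<Rightarrow> bool" where
  "sirreducible C D f \<longleftrightarrow> (\<exists>i0. pirr (fst C i0) (fst D i0) (f i0)
      \<and> (\<forall>n. pirr (fst C n) (fst D n) (f n) \<longrightarrow> n = i0)
      \<and> (\<forall>n<i0. psplit_epi (fst C n) (fst D n) (f n))
      \<and> (\<forall>n>i0. psplit_mono (fst C n) (fst D n) (f n)))"

end

theory Submission
  imports Defs
begin

lemma pmodD: "v \<in> pmod X \<Longrightarrow> v \<in> carrier_vec (fst X) \<and> snd X *\<^sub>v v = v"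
  by (simp add: pmod_def)

lemma rsmult_carrier[simp]: "v \<in> carrier_vec n \<Longrightarrow> rsmult v c \<in> carrier_vec n"
  by (simp add: rsmult_def)

lemma rsmult_dim[simp]: "dim_vec (rsmult v c) = dim_vec v"
  by (simp add: rsmult_def)

lemma mat_vec_rsmult:
  assumes "A \<in> carrier_mat m n" "v \<in> carrier_vec n"
  shows "A *\<^sub>v rsmult v c = rsmult (A *\<^sub>v v) c"
  using assms
  by (intro eq_vecI) (auto simp: rsmult_def scalar_prod_def sum_distrib_right mult.assoc)

lemma rsmult_add:
  assumes "v \<in> carrier_vec n" "w \<in> carrier_vec n"
  shows "rsmult (v + w) c = rsmult v c + rsmult w c"
  using assms by (intro eq_vecI) (auto simp: rsmult_def distrib_right)

lemma rsmult_neg: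
  assumes "v \<in> carrier_vec n"
  shows "v + rsmult v (-1) = 0\<^sub>v n"
  using assms by (intro eq_vecI) (auto simp: rsmult_def)


lemma phom_carrier: "phom X Y A \<Longrightarrow> A \<in> carrier_mat (fst Y) (fst X)"
  by (simp add: phom_def)

lemma pobj_carrier: "pobj X \<Longrightarrow> snd X \<in> carrier_mat (fst X) (fst X)"
  by (simp add: pobj_def)

lemma mat_vec_zero: "A \<in> carrier_mat m n \<Longrightarrow> A *\<^sub>v 0\<^sub>v n = 0\<^sub>v m"
  by (intro eq_vecI) auto

lemma pmod_carrier: "v \<in> pmod X \<Longrightarrow> v \<in> carrier_vec (fst X)"
  by (simp add: pmod_def)

lemma hom_pmod: assumes "phom X Y A" "v \<in> pmod X" shows "A *\<^sub>v v \<in> pmod Y"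
proof -
  have c: "A \<in> carrier_mat (fst Y) (fst X)" "snd Y \<in> carrier_mat (fst Y) (fst Y)"
    "v \<in> carrier_vec (fst X)" using assms by (auto simp: phom_def pobj_def pmod_def)
  have "snd Y *\<^sub>v (A *\<^sub>v v) = (snd Y * A) *\<^sub>v v" using c by simp
  also have "\<dots> = A *\<^sub>v v" using assms by (simp add: phom_def)
  finally show ?thesis using c by (simp add: pmod_def)
qed

lemma pmod_add: assumes "pobj X" "v \<in> pmod X" "w \<in> pmod X" shows "v + w \<in> pmod X"
  using assms mult_add_distrib_mat_vec[of "snd X" "fst X" "fst X" v w]
  by (auto simp: pmod_def pobj_def)

lemma pmod_rsmult: assumes "pobj X" "v \<in> pmod X" shows "rsmult v c \<in> pmod X"
  using assms mat_vec_rsmult[of "snd X" "fst X" "fst X" v c]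
  by (auto simp: pmod_def pobj_def)

lemma pmod_zero: assumes "pobj X" shows "0\<^sub>v (fst X) \<in> pmod X"
  using assms mat_vec_zero[of "snd X" "fst X" "fst X"] by (auto simp: pmod_def pobj_def)

lemma psub_pmod: "pobj X \<Longrightarrow> psub X (pmod X)"
  by (auto simp: psub_def pmod_zero pmod_add pmod_rsmult)

lemma prad_pmod: "prad X \<subseteq> pmod X" by (auto simp: prad_def)

lemma prad_add: assumes "pobj X" "v \<in> prad X" "w \<in> prad X" shows "v + w \<in> prad X"
  using assms by (auto simp: prad_def pmaxsub_def psub_def pmod_add)

lemma prad_rsmult: assumes "pobj X" "v \<in> prad X" shows "rsmult v c \<in> prad X"
  using assms by (auto simp: prad_def pmaxsub_def psub_def pmod_rsmult)

lemma uminus_rsmult: "- v = rsmult v (-1)"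
  by (intro eq_vecI) (auto simp: rsmult_def)

lemma hom_rad: assumes hA: "phom X Y A" and v: "v \<in> prad X" shows "A *\<^sub>v v \<in> prad Y"
proof -
  have pX: "pobj X" and pY: "pobj Y" and cA: "A \<in> carrier_mat (fst Y) (fst X)"
    using hA by (auto simp: phom_def)
  have vX: "v \<in> pmod X" using v prad_pmod by blast
  have "A *\<^sub>v v \<in> U" if U: "pmaxsub Y U" for U
  proof -
    have sU: "psub Y U" using U by (simp add: pmaxsub_def)
    define P where "P = {w \<in> pmod X. A *\<^sub>v w \<in> U}"
    have sP: "psub X P"
      unfolding psub_def P_def
    proof (intro conjI ballI allI)
      show "0\<^sub>v (fst X) \<in> {w \<in> pmod X. A *\<^sub>v w \<in> U}"
        using pmod_zero[OF pX] mat_vec_zero[OF cA] sU by (auto simp: psub_def)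
    next
      fix u w assume u: "u \<in> {w \<in> pmod X. A *\<^sub>v w \<in> U}" and w: "w \<in> {w \<in> pmod X. A *\<^sub>v w \<in> U}"
      have "A *\<^sub>v (u + w) = A *\<^sub>v u + A *\<^sub>v w"
        using u w cA by (intro mult_add_distrib_mat_vec) (auto simp: pmod_def)
      then show "u + w \<in> {w \<in> pmod X. A *\<^sub>v w \<in> U}"
        using u w sU pmod_add[OF pX] by (auto simp: psub_def)
    next
      fix u c assume u: "u \<in> {w \<in> pmod X. A *\<^sub>v w \<in> U}"
      then show "rsmult u c \<in> {w \<in> pmod X. A *\<^sub>v w \<in> U}"
        using sU pmod_rsmult[OF pX] mat_vec_rsmult[OF cA pmod_carrier, of u c]
        by (auto simp: psub_def)
    qed auto
    show ?thesis
    proof (cases "P = pmod X")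
      case True then show ?thesis using vX by (auto simp: P_def)
    next
      case False
      have "pmaxsub X P"
        unfolding pmaxsub_def
      proof (intro conjI allI impI sP False)
        fix W assume W: "psub X W \<and> P \<subseteq> W"
        show "W = P \<or> W = pmod X"
        proof (rule ccontr)
          assume nW: "\<not> (W = P \<or> W = pmod X)"
          then obtain w0 where w0: "w0 \<in> W" "w0 \<notin> P" using W by blast
          have w0X: "w0 \<in> pmod X" using W w0 by (auto simp: psub_def)
          have Aw0: "A *\<^sub>v w0 \<notin> U" using w0 w0X by (auto simp: P_def)
          define W' where "W' = {A *\<^sub>v w + u | w u. w \<in> W \<and> u \<in> U}"
          have WX: "W \<subseteq> pmod X" using W by (simp add: psub_def)
          have UY: "U \<subseteq> pmod Y" using sU by (simp add: psub_def)
          have sW': "psub Y W'"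
            unfolding psub_def
          proof (intro conjI ballI allI)
            show "W' \<subseteq> pmod Y"
              using WX UY hom_pmod[OF hA] pmod_add[OF pY] unfolding W'_def by blast
          next
            have "0\<^sub>v (fst Y) = A *\<^sub>v 0\<^sub>v (fst X) + 0\<^sub>v (fst Y)"
              using mat_vec_zero[OF cA] by simp
            moreover have "0\<^sub>v (fst X) \<in> W" "0\<^sub>v (fst Y) \<in> U" using W sU by (auto simp: psub_def)
            ultimately show "0\<^sub>v (fst Y) \<in> W'" unfolding W'_def by blast
          next
            fix a b assume a: "a \<in> W'" and b: "b \<in> W'"
            then obtain w1 u1 w2 u2 where ab: "a = A *\<^sub>v w1 + u1" "b = A *\<^sub>v w2 + u2"
              "w1 \<in> W" "u1 \<in> U" "w2 \<in> W" "u2 \<in> U" by (auto simp: W'_def)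
            have c: "w1 \<in> carrier_vec (fst X)" "w2 \<in> carrier_vec (fst X)"
              "u1 \<in> carrier_vec (fst Y)" "u2 \<in> carrier_vec (fst Y)"
              using ab WX UY by (auto simp: pmod_def)
            have "a + b = A *\<^sub>v (w1 + w2) + (u1 + u2)"
              using c cA unfolding ab
              by (subst mult_add_distrib_mat_vec[OF cA]) (auto intro!: eq_vecI)
            moreover have "w1 + w2 \<in> W" "u1 + u2 \<in> U" using ab W sU by (auto simp: psub_def)
            ultimately show "a + b \<in> W'" by (auto simp: W'_def)
          next
            fix a c assume a: "a \<in> W'"
            then obtain w1 u1 where ab: "a = A *\<^sub>v w1 + u1" "w1 \<in> W" "u1 \<in> U" by (auto simp: W'_def)
            have cc: "w1 \<in> carrier_vec (fst X)" "u1 \<in> carrier_vec (fst Y)"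
              using ab WX UY by (auto simp: pmod_def)
            have "rsmult a c = A *\<^sub>v (rsmult w1 c) + rsmult u1 c"
              unfolding ab using cc cA
              by (subst rsmult_add[of _ "fst Y"]) (auto simp: mat_vec_rsmult)
            moreover have "rsmult w1 c \<in> W" "rsmult u1 c \<in> U" using ab W sU by (auto simp: psub_def)
            ultimately show "rsmult a c \<in> W'" by (auto simp: W'_def)
          qed
          have UW': "U \<subseteq> W'"
          proof
            fix u assume u: "u \<in> U"
            then have "u = A *\<^sub>v 0\<^sub>v (fst X) + u"
              using UY mat_vec_zero[OF cA] by (auto simp: pmod_def)
            moreover have "0\<^sub>v (fst X) \<in> W" using W by (simp add: psub_def)
            ultimately show "u \<in> W'" using u by (auto simp: W'_def)
          qed
          have "A *\<^sub>v w0 \<in> W'"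
          proof -
            have "A *\<^sub>v w0 = A *\<^sub>v w0 + 0\<^sub>v (fst Y)" using cA w0X by (auto simp: pmod_def)
            moreover have "0\<^sub>v (fst Y) \<in> U" using sU by (simp add: psub_def)
            ultimately show ?thesis using w0 by (auto simp: W'_def)
          qed
          then have "W' \<noteq> U" using Aw0 by blast
          then have W'Y: "W' = pmod Y" using U sW' UW' by (auto simp: pmaxsub_def)
          have "pmod X \<subseteq> W"
          proof
            fix x assume x: "x \<in> pmod X"
            then have "A *\<^sub>v x \<in> W'" using W'Y hom_pmod[OF hA] by blast
            then obtain w u where wu: "A *\<^sub>v x = A *\<^sub>v w + u" "w \<in> W" "u \<in> U" by (auto simp: W'_def)
            have cx: "x \<in> carrier_vec (fst X)" "w \<in> carrier_vec (fst X)" "u \<in> carrier_vec (fst Y)"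
              using x wu WX UY by (auto simp: pmod_def)
            define y where "y = x + rsmult w (-1)"
            have "A *\<^sub>v y = A *\<^sub>v x + rsmult (A *\<^sub>v w) (-1)"
              unfolding y_def using cx cA
              by (subst mult_add_distrib_mat_vec[OF cA]) (auto simp: mat_vec_rsmult)
            also have "\<dots> = u" unfolding wu(1) using cx cA
              by (intro eq_vecI) (auto simp: rsmult_def)
            finally have "A *\<^sub>v y = u" .
            moreover have "y \<in> pmod X" unfolding y_def
              using x wu WX pmod_add[OF pX] pmod_rsmult[OF pX] by auto
            ultimately have "y \<in> P" using wu by (auto simp: P_def)
            then have "y \<in> W" using W by blast
            then have "y + w \<in> W" using wu W by (auto simp: psub_def)
            moreover have "y + w = x" unfolding y_def using cx
              by (intro eq_vecI) (auto simp: rsmult_def)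
            ultimately show "x \<in> W" by simp
          qed
          then show False using nW W by (auto simp: psub_def)
        qed
      qed
      then have "v \<in> P" using v by (auto simp: prad_def)
      then show ?thesis by (auto simp: P_def)
    qed
  qed
  then show ?thesis using hom_pmod[OF hA vX] by (auto simp: prad_def)
qed


lemma phom_comp: assumes "phom X Y A" "phom Y Z B" shows "phom X Z (B * A)"
proof -
  have c: "A \<in> carrier_mat (fst Y) (fst X)" "B \<in> carrier_mat (fst Z) (fst Y)"
    "snd X \<in> carrier_mat (fst X) (fst X)" "snd Z \<in> carrier_mat (fst Z) (fst Z)"
    using assms by (auto simp: phom_def pobj_def)
  have "snd Z * (B * A) = (snd Z * B) * A" using c by simp
  also have "\<dots> = B * A" using assms by (simp add: phom_def)
  finally have 1: "snd Z * (B * A) = B * A" .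
  have "(B * A) * snd X = B * (A * snd X)" using c by simp
  also have "\<dots> = B * A" using assms by (simp add: phom_def)
  finally show ?thesis using 1 assms c by (auto simp: phom_def)
qed

lemma phom_id: "pobj X \<Longrightarrow> phom X X (snd X)"
  by (auto simp: phom_def pobj_def)

lemma phom_add: assumes "phom X Y A" "phom X Y B" shows "phom X Y (A + B)"
proof -
  have c: "A \<in> carrier_mat (fst Y) (fst X)" "B \<in> carrier_mat (fst Y) (fst X)"
    "snd X \<in> carrier_mat (fst X) (fst X)" "snd Y \<in> carrier_mat (fst Y) (fst Y)"
    using assms by (auto simp: phom_def pobj_def)
  have "snd Y * (A + B) = snd Y * A + snd Y * B" using c by (simp add: mult_add_distrib_mat)
  moreover have "(A + B) * snd X = A * snd X + B * snd X" using c by (simp add: add_mult_distrib_mat)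
  ultimately show ?thesis using assms c by (auto simp: phom_def)
qed

lemma phom_uminus: assumes "phom X Y A" shows "phom X Y (- A)"
  using assms by (auto simp: phom_def pobj_def)

lemma pradhom_phom: "pradhom X Y A \<Longrightarrow> phom X Y A" by (simp add: pradhom_def)

lemma rad_comp_left: assumes "pradhom Y Z D" "phom X Y S" shows "pradhom X Z (D * S)"
  unfolding pradhom_def
proof (intro conjI ballI)
  show "phom X Z (D * S)" using assms phom_comp pradhom_phom by blast
  fix v assume v: "v \<in> pmod X"
  have "(D * S) *\<^sub>v v = D *\<^sub>v (S *\<^sub>v v)"
    using assms v by (auto simp: pradhom_def phom_def pmod_def)
  then show "(D * S) *\<^sub>v v \<in> prad Z" using assms hom_pmod[OF assms(2) v]
    by (auto simp: pradhom_def)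
qed

lemma rad_comp_right: assumes "pradhom X Y D" "phom Y Z S" shows "pradhom X Z (S * D)"
  unfolding pradhom_def
proof (intro conjI ballI)
  show "phom X Z (S * D)" using assms phom_comp pradhom_phom by blast
  fix v assume v: "v \<in> pmod X"
  have "(S * D) *\<^sub>v v = S *\<^sub>v (D *\<^sub>v v)"
    using assms v by (auto simp: pradhom_def phom_def pmod_def)
  then show "(S * D) *\<^sub>v v \<in> prad Z" using assms hom_rad[OF assms(2)] v
    by (auto simp: pradhom_def)
qed

lemma rad_add: assumes "pradhom X Y A" "pradhom X Y B" shows "pradhom X Y (A + B)"
  unfolding pradhom_def
proof (intro conjI ballI)
  show "phom X Y (A + B)" using assms phom_add pradhom_phom by blast
  fix v assume v: "v \<in> pmod X"
  have "(A + B) *\<^sub>v v = A *\<^sub>v v + B *\<^sub>v v"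
    using assms v by (intro add_mult_distrib_mat_vec) (auto simp: pradhom_def phom_def pmod_def)
  then show "(A + B) *\<^sub>v v \<in> prad Y" using assms v prad_add[of Y "A *\<^sub>v v" "B *\<^sub>v v"]
    by (auto simp: pradhom_def phom_def)
qed

lemma rad_uminus: assumes "pradhom X Y A" shows "pradhom X Y (- A)"
  unfolding pradhom_def
proof (intro conjI ballI)
  show "phom X Y (- A)" using assms phom_uminus pradhom_phom by blast
  fix v assume v: "v \<in> pmod X"
  have "(- A) *\<^sub>v v = rsmult (A *\<^sub>v v) (-1)"
    using assms v by (subst uminus_mult_mat_vec) (auto simp: pradhom_def phom_def pmod_def uminus_rsmult)
  then show "(- A) *\<^sub>v v \<in> prad Y" using assms v prad_rsmult[of Y "A *\<^sub>v v" "-1"]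
    by (auto simp: pradhom_def phom_def)
qed

lemma gen_cols:
  assumes pX: "pobj X" and W: "psub X W" and cols: "\<forall>j<fst X. col (snd X) j \<in> W"
  shows "pmod X \<subseteq> W"
proof
  fix v assume v: "v \<in> pmod X"
  let ?n = "fst X" and ?e = "snd X"
  have ce: "?e \<in> carrier_mat ?n ?n" using pX by (simp add: pobj_def)
  have cv: "v \<in> carrier_vec ?n" using v by (simp add: pmod_def)
  define p where "p k = vec ?n (\<lambda>i. \<Sum>j<k. ?e $$ (i,j) * v $ j)" for k
  have "k \<le> ?n \<Longrightarrow> p k \<in> W" for k
  proof (induction k)
    case 0
    have "p 0 = 0\<^sub>v ?n" by (auto simp: p_def)
    then show ?case using W by (simp add: psub_def)
  next
    case (Suc k)
    have "p (Suc k) = p k + rsmult (col ?e k) (v $ k)"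
      using Suc.prems ce by (intro eq_vecI) (auto simp: p_def rsmult_def)
    moreover have "rsmult (col ?e k) (v $ k) \<in> W" using cols Suc.prems W by (auto simp: psub_def)
    ultimately show ?case using Suc W by (auto simp: psub_def)
  qed
  then have "p ?n \<in> W" by simp
  moreover have "p ?n = v"
  proof -
    have "p ?n = ?e *\<^sub>v v" using ce cv
      by (intro eq_vecI) (auto simp: p_def scalar_prod_def row_def lessThan_atLeast0 intro!: sum.cong)
    then show ?thesis using v by (simp add: pmod_def)
  qed
  ultimately show "v \<in> W" by simp
qed

lemma col_pmod: assumes pX: "pobj X" and j: "j < fst X" shows "col (snd X) j \<in> pmod X"
proof -
  have ce: "snd X \<in> carrier_mat (fst X) (fst X)" and ee: "snd X * snd X = snd X"
    using pX by (auto simp: pobj_def)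
  have "snd X *\<^sub>v col (snd X) j = col (snd X * snd X) j" using ce j by (intro eq_vecI) auto
  then show ?thesis using ee ce j by (simp add: pmod_def)
qed

lemma exists_max:
  assumes pX: "pobj X" and N: "psub X N" and ne: "N \<noteq> pmod X"
  shows "\<exists>U. pmaxsub X U \<and> N \<subseteq> U"
proof -
  define F where "F = {W. psub X W \<and> N \<subseteq> W \<and> W \<noteq> pmod X}"
  have "\<forall>C\<in>chains F. \<exists>U\<in>F. \<forall>W\<in>C. W \<subseteq> U"
  proof
    fix C assume C: "C \<in> chains F"
    show "\<exists>U\<in>F. \<forall>W\<in>C. W \<subseteq> U"
    proof (cases "C = {}")
      case True then show ?thesis using N ne by (auto simp: F_def)
    next
      case False
      have CF: "C \<subseteq> F" and ch: "chain\<^sub>\<subseteq> C" using C by (auto simp: chains_def)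
      have sch: "subset.chain F C" using C by (simp add: chains_alt_def)
      have sub: "psub X (\<Union>C)"
        unfolding psub_def
      proof (intro conjI ballI allI)
        show "\<Union>C \<subseteq> pmod X" using CF by (auto simp: F_def psub_def)
        show "0\<^sub>v (fst X) \<in> \<Union>C" using CF False by (auto simp: F_def psub_def)
      next
        fix u w assume u: "u \<in> \<Union>C" and w: "w \<in> \<Union>C"
        then obtain A B where AB: "A \<in> C" "B \<in> C" "u \<in> A" "w \<in> B" by auto
        have sA: "psub X A" "psub X B" using AB CF by (auto simp: F_def)
        have "A \<subseteq> B \<or> B \<subseteq> A" using ch AB by (auto simp: chain_subset_def)
        then show "u + w \<in> \<Union>C"
        proof
          assume "A \<subseteq> B" then have "u + w \<in> B" using AB sA by (auto simp: psub_def)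
          then show ?thesis using AB by blast
        next
          assume "B \<subseteq> A" then have "u + w \<in> A" using AB sA by (auto simp: psub_def)
          then show ?thesis using AB by blast
        qed
      next
        fix u c assume "u \<in> \<Union>C"
        then obtain A where A: "A \<in> C" "u \<in> A" by auto
        then have "psub X A" using CF by (auto simp: F_def)
        then have "rsmult u c \<in> A" using A by (auto simp: psub_def)
        then show "rsmult u c \<in> \<Union>C" using A by blast
      qed
      have "\<Union>C \<noteq> pmod X"
      proof
        assume eq: "\<Union>C = pmod X"
        let ?G = "insert (0\<^sub>v (fst X)) {col (snd X) j | j. j < fst X}"
        have "finite ?G" by simp
        moreover have "?G \<subseteq> \<Union>C" using eq col_pmod[OF pX] pmod_zero[OF pX] by auto
        ultimately obtain B where B: "B \<in> C" "?G \<subseteq> B"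
          using finite_subset_Union_chain[OF _ _ False sch] by blast
        have "psub X B" "B \<noteq> pmod X" using B CF by (auto simp: F_def)
        moreover have "pmod X \<subseteq> B" using gen_cols[OF pX \<open>psub X B\<close>] B by auto
        ultimately show False by (auto simp: psub_def)
      qed
      moreover have "N \<subseteq> \<Union>C" using CF False by (auto simp: F_def)
      ultimately show ?thesis using sub by (auto simp: F_def)
    qed
  qed
  from Zorn_Lemma2[OF this] obtain M where M: "M \<in> F" "\<forall>W\<in>F. M \<subseteq> W \<longrightarrow> W = M" by blast
  have "pmaxsub X M" using M by (auto simp: pmaxsub_def F_def)
  then show ?thesis using M by (auto simp: F_def)
qed

lemma rad_surj:
  assumes R: "pradhom X X R" and m: "m \<in> pmod X"
  shows "\<exists>x\<in>pmod X. (snd X + R) *\<^sub>v x = m"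
proof -
  have pX: "pobj X" using R by (simp add: pradhom_def phom_def)
  have ce: "snd X \<in> carrier_mat (fst X) (fst X)" using pX by (simp add: pobj_def)
  have cR: "R \<in> carrier_mat (fst X) (fst X)" using R by (simp add: pradhom_def phom_def)
  let ?u = "snd X + R"
  have hu: "phom X X ?u" using phom_add[OF phom_id[OF pX] pradhom_phom[OF R]] .
  define N where "N = {?u *\<^sub>v x | x. x \<in> pmod X}"
  have sN: "psub X N"
    unfolding psub_def
  proof (intro conjI ballI allI)
    show "N \<subseteq> pmod X" using hom_pmod[OF hu] by (auto simp: N_def)
    have "?u *\<^sub>v 0\<^sub>v (fst X) = 0\<^sub>v (fst X)" using mat_vec_zero[of ?u] ce cR by simp
    then show "0\<^sub>v (fst X) \<in> N" using pmod_zero[OF pX] unfolding N_def by (metis (mono_tags, lifting) CollectI)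
  next
    fix a b assume "a \<in> N" "b \<in> N"
    then obtain x y where xy: "a = ?u *\<^sub>v x" "b = ?u *\<^sub>v y" "x \<in> pmod X" "y \<in> pmod X"
      by (auto simp: N_def)
    have "a + b = ?u *\<^sub>v (x + y)" unfolding xy using xy ce cR
      by (subst mult_add_distrib_mat_vec[of _ "fst X" "fst X"]) (auto simp: pmod_def)
    then show "a + b \<in> N" using xy pmod_add[OF pX] unfolding N_def by blast
  next
    fix a c assume "a \<in> N"
    then obtain x where xy: "a = ?u *\<^sub>v x" "x \<in> pmod X" by (auto simp: N_def)
    have "rsmult a c = ?u *\<^sub>v (rsmult x c)" unfolding xy using xy ce cR
      by (subst mat_vec_rsmult[of _ "fst X" "fst X"]) (auto simp: pmod_def)
    then show "rsmult a c \<in> N" using xy pmod_rsmult[OF pX] unfolding N_def by blast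
  qed
  have "N = pmod X"
  proof (rule ccontr)
    assume "N \<noteq> pmod X"
    then obtain U where U: "pmaxsub X U" "N \<subseteq> U" using exists_max[OF pX sN] by blast
    have sU: "psub X U" using U by (simp add: pmaxsub_def)
    have "pmod X \<subseteq> U"
    proof
      fix y assume y: "y \<in> pmod X"
      have cy: "y \<in> carrier_vec (fst X)" using y by (simp add: pmod_def)
      have "?u *\<^sub>v y \<in> U" using U y unfolding N_def by blast
      moreover have "R *\<^sub>v y \<in> U" using R y U by (auto simp: pradhom_def prad_def)
      then have "rsmult (R *\<^sub>v y) (-1) \<in> U" using sU by (simp add: psub_def)
      ultimately have "?u *\<^sub>v y + rsmult (R *\<^sub>v y) (-1) \<in> U" using sU by (simp add: psub_def)
      moreover have "?u *\<^sub>v y + rsmult (R *\<^sub>v y) (-1) = snd X *\<^sub>v y"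
        using ce cR cy by (intro eq_vecI) (auto simp: rsmult_def add_scalar_prod_distrib[of _ "fst X"])
      ultimately show "y \<in> U" using y by (simp add: pmod_def)
    qed
    then show False using U by (auto simp: pmaxsub_def psub_def)
  qed
  then have "m \<in> N" using m by simp
  then show ?thesis unfolding N_def by blast
qed

lemma rad_rinv:
  assumes R: "pradhom X X R"
  shows "\<exists>z. phom X X z \<and> (snd X + R) * z = snd X"
proof -
  have pX: "pobj X" using R by (simp add: pradhom_def phom_def)
  let ?n = "fst X" and ?e = "snd X"
  have ce: "?e \<in> carrier_mat ?n ?n" and ee: "?e * ?e = ?e" using pX by (auto simp: pobj_def)
  have cR: "R \<in> carrier_mat ?n ?n" using R by (simp add: pradhom_def phom_def)
  let ?u = "?e + R"
  have hu: "phom X X ?u" using phom_add[OF phom_id[OF pX] pradhom_phom[OF R]] .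
  have "\<forall>j. \<exists>x. j < ?n \<longrightarrow> x \<in> pmod X \<and> ?u *\<^sub>v x = col ?e j"
    using rad_surj[OF R col_pmod[OF pX]] by blast
  then obtain xs where xs: "\<And>j. j < ?n \<Longrightarrow> xs j \<in> pmod X \<and> ?u *\<^sub>v xs j = col ?e j"
    by metis
  define V where "V = mat ?n ?n (\<lambda>(i,j). xs j $ i)"
  have cV: "V \<in> carrier_mat ?n ?n" by (simp add: V_def)
  have colV: "j < ?n \<Longrightarrow> col V j = xs j" for j
    using xs[of j] by (intro eq_vecI) (auto simp: V_def pmod_def)
  have uV: "?u * V = ?e"
  proof (rule eq_matI)
    fix i j assume i: "i < dim_row ?e" and j: "j < dim_col ?e"
    have "(?u * V) $$ (i,j) = row ?u i \<bullet> col V j" using i j ce cV cR by simp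
    also have "\<dots> = (?u *\<^sub>v xs j) $ i" using i j ce cR colV by simp
    also have "\<dots> = ?e $$ (i,j)" using xs[of j] i j ce by simp
    finally show "(?u * V) $$ (i,j) = ?e $$ (i,j)" .
  qed (use ce cR cV in auto)
  have eV: "?e * V = V"
  proof (rule eq_matI)
    fix i j assume i: "i < dim_row V" and j: "j < dim_col V"
    have "(?e * V) $$ (i,j) = (?e *\<^sub>v xs j) $ i" using i j ce cV colV by simp
    also have "\<dots> = V $$ (i,j)" using xs[of j] i j cV by (simp add: pmod_def V_def)
    finally show "(?e * V) $$ (i,j) = V $$ (i,j)" .
  qed (use ce cV in auto)
  define z where "z = V * ?e"
  have "?e * z = z" unfolding z_def using ce cV eV
    by (subst assoc_mult_mat[symmetric, of _ ?n ?n _ ?n _ ?n]) auto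
  moreover have "z * ?e = z" unfolding z_def using ce cV ee by simp
  moreover have "?u * z = ?e" unfolding z_def using ce cV cR uV ee
    by (subst assoc_mult_mat[symmetric, of _ ?n ?n _ ?n _ ?n]) auto
  moreover have "z \<in> carrier_mat ?n ?n" using ce cV by (simp add: z_def)
  ultimately show ?thesis using pX by (auto simp: phom_def)
qed

lemma rad_linv:
  assumes R: "pradhom X X R"
  shows "\<exists>t. phom X X t \<and> t * (snd X + R) = snd X"
proof -
  have pX: "pobj X" using R by (simp add: pradhom_def phom_def)
  let ?n = "fst X" and ?e = "snd X"
  have ce: "?e \<in> carrier_mat ?n ?n" and ee: "?e * ?e = ?e" using pX by (auto simp: pobj_def)
  have cR: "R \<in> carrier_mat ?n ?n" using R by (simp add: pradhom_def phom_def)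
  obtain z where z: "phom X X z" "(?e + R) * z = ?e" using rad_rinv[OF R] by blast
  have cz: "z \<in> carrier_mat ?n ?n" using z by (simp add: phom_def)
  have R2: "pradhom X X (- (R * z))" using rad_uminus[OF rad_comp_left[OF R z(1)]] .
  obtain w where w: "phom X X w" "(?e + - (R * z)) * w = ?e" using rad_rinv[OF R2] by blast
  have cw: "w \<in> carrier_mat ?n ?n" using w by (simp add: phom_def)
  have zeq: "?e + - (R * z) = z"
  proof -
    have "?e * z + R * z = ?e" using z ce cR cz by (simp add: add_mult_distrib_mat)
    then have "z + R * z = ?e" using z by (simp add: phom_def)
    then have "?e + - (R * z) = (z + R * z) + - (R * z)" by simp
    also have "\<dots> = z" using cz cR by (intro eq_matI) auto
    finally show ?thesis .
  qed
  have zw: "z * w = ?e" using w zeq by simp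
  have "?e + R = (?e + R) * ?e" using ce cR z
    by (simp add: add_mult_distrib_mat ee) (metis pradhom_phom R phom_def)
  also have "\<dots> = (?e + R) * (z * w)" using zw by simp
  also have "\<dots> = ((?e + R) * z) * w" using ce cR cz cw
    by (subst assoc_mult_mat[of _ ?n ?n _ ?n _ ?n]) auto
  also have "\<dots> = w" using z w by (simp add: phom_def)
  finally have "?e + R = w" .
  then show ?thesis using z zw by auto
qed


lemma phomD: assumes "phom X Y A"
  shows "A \<in> carrier_mat (fst Y) (fst X)" "snd Y * A = A" "A * snd X = A"
    "snd X \<in> carrier_mat (fst X) (fst X)" "snd Y \<in> carrier_mat (fst Y) (fst Y)"
    "pobj X" "pobj Y"
  using assms by (auto simp: phom_def pobj_def)

lemma massoc: assumes "phom X Y A" "phom Y Z B" "phom Z W C"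
  shows "C * (B * A) = (C * B) * A"
  using assoc_mult_mat[OF phomD(1)[OF assms(3)] phomD(1)[OF assms(2)] phomD(1)[OF assms(1)]] by simp

lemma sm_comp: assumes "psplit_mono X Y A" "psplit_mono Y Z B" shows "psplit_mono X Z (B * A)"
proof -
  obtain p where p: "phom Y X p" "p * A = snd X" using assms(1) by (auto simp: psplit_mono_def)
  obtain q where q: "phom Z Y q" "q * B = snd Y" using assms(2) by (auto simp: psplit_mono_def)
  have hA: "phom X Y A" and hB: "phom Y Z B" using assms by (auto simp: psplit_mono_def)
  note c = phomD[OF hA] phomD[OF hB] phomD[OF p(1)] phomD[OF q(1)]
  have "(p * q) * (B * A) = p * (q * (B * A))" using massoc[OF phom_comp[OF hA hB] q(1) p(1)] by simp
  also have "\<dots> = p * ((q * B) * A)" using massoc[OF hA hB q(1)] by simp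
  also have "\<dots> = snd X" using q p c by simp
  finally show ?thesis using phom_comp[OF hA hB] phom_comp[OF q(1) p(1)]
    by (auto simp: psplit_mono_def)
qed

lemma se_comp: assumes "psplit_epi X Y A" "psplit_epi Y Z B" shows "psplit_epi X Z (B * A)"
proof -
  obtain p where p: "phom Y X p" "A * p = snd Y" using assms(1) by (auto simp: psplit_epi_def)
  obtain q where q: "phom Z Y q" "B * q = snd Z" using assms(2) by (auto simp: psplit_epi_def)
  have hA: "phom X Y A" and hB: "phom Y Z B" using assms by (auto simp: psplit_epi_def)
  note c = phomD[OF hA] phomD[OF hB] phomD[OF p(1)] phomD[OF q(1)]
  have "(B * A) * (p * q) = B * (A * (p * q))" using massoc[OF phom_comp[OF q(1) p(1)] hA hB] by simp
  also have "\<dots> = B * ((A * p) * q)" using massoc[OF q(1) p(1) hA] by simp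
  also have "\<dots> = snd Z" using q p c by simp
  finally show ?thesis using phom_comp[OF hA hB] phom_comp[OF q(1) p(1)]
    by (auto simp: psplit_epi_def)
qed

lemma sm_pert: assumes "psplit_mono X Y A" "pradhom X Y R" shows "psplit_mono X Y (A + R)"
proof -
  obtain p where p: "phom Y X p" "p * A = snd X" using assms(1) by (auto simp: psplit_mono_def)
  have hA: "phom X Y A" using assms by (auto simp: psplit_mono_def)
  have hR: "phom X Y R" using assms pradhom_phom by blast
  note c = phomD[OF hA] phomD[OF hR] phomD[OF p(1)]
  have pR: "pradhom X X (p * R)" using rad_comp_right[OF assms(2) p(1)] .
  obtain t where t: "phom X X t" "t * (snd X + p * R) = snd X" using rad_linv[OF pR] by blast
  note c2 = phomD[OF t(1)]
  have "(t * p) * (A + R) = t * (p * (A + R))" using massoc[OF phom_add[OF hA hR] p(1) t(1)] by simp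
  also have "\<dots> = t * (p * A + p * R)" using c by (simp add: mult_add_distrib_mat)
  also have "\<dots> = snd X" using p t by simp
  finally show ?thesis using phom_add[OF hA hR] phom_comp[OF p(1) t(1)]
    by (auto simp: psplit_mono_def)
qed

lemma se_pert: assumes "psplit_epi X Y A" "pradhom X Y R" shows "psplit_epi X Y (A + R)"
proof -
  obtain p where p: "phom Y X p" "A * p = snd Y" using assms(1) by (auto simp: psplit_epi_def)
  have hA: "phom X Y A" using assms by (auto simp: psplit_epi_def)
  have hR: "phom X Y R" using assms pradhom_phom by blast
  note c = phomD[OF hA] phomD[OF hR] phomD[OF p(1)]
  have pR: "pradhom Y Y (R * p)" using rad_comp_left[OF assms(2) p(1)] .
  obtain t where t: "phom Y Y t" "(snd Y + R * p) * t = snd Y" using rad_rinv[OF pR] by blast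
  note c2 = phomD[OF t(1)]
  have "(A + R) * (p * t) = ((A + R) * p) * t" using massoc[OF t(1) p(1) phom_add[OF hA hR]] by simp
  also have "\<dots> = (A * p + R * p) * t" using c by (simp add: add_mult_distrib_mat)
  also have "\<dots> = snd Y" using p t by simp
  finally show ?thesis using phom_add[OF hA hR] phom_comp[OF t(1) p(1)]
    by (auto simp: psplit_epi_def)
qed

lemma sm_cancel_right:
  assumes "psplit_mono X Z (B * A)" "phom Y Z B" "psplit_epi X Y A"
  shows "psplit_mono Y Z B"
proof -
  obtain L where L: "phom Z X L" "L * (B * A) = snd X" using assms(1) by (auto simp: psplit_mono_def)
  obtain a where a: "phom Y X a" "A * a = snd Y" using assms(3) by (auto simp: psplit_epi_def)
  have hA: "phom X Y A" using assms by (auto simp: psplit_epi_def)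
  note c = phomD[OF hA] phomD[OF assms(2)] phomD[OF L(1)] phomD[OF a(1)]
  have hAL: "phom Z Y (A * L)" using phom_comp[OF L(1) hA] .
  have "(A * L) * B = ((A * L) * B) * snd Y" using phomD(3)[OF phom_comp[OF assms(2) hAL]] by simp
  also have "\<dots> = ((A * L) * B) * (A * a)" using a by simp
  also have "\<dots> = (((A * L) * B) * A) * a" using massoc[OF a(1) hA phom_comp[OF assms(2) hAL]] by simp
  also have "((A * L) * B) * A = A * (L * (B * A))"
    using massoc[OF hA assms(2) hAL] massoc[OF phom_comp[OF hA assms(2)] L(1) hA] by simp
  also have "\<dots> = A" using L c by simp
  finally show ?thesis using a assms(2) phom_comp[OF L(1) hA] by (auto simp: psplit_mono_def)
qed

lemma sm_cancel_left:
  assumes "psplit_mono X Z (B * A)" "phom X Y A" "phom Y Z B"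
  shows "psplit_mono X Y A"
proof -
  obtain L where L: "phom Z X L" "L * (B * A) = snd X" using assms(1) by (auto simp: psplit_mono_def)
  note c = phomD[OF assms(2)] phomD[OF assms(3)] phomD[OF L(1)]
  have "(L * B) * A = snd X" using L massoc[OF assms(2,3) L(1)] by simp
  then show ?thesis using assms(2) phom_comp[OF assms(3) L(1)] by (auto simp: psplit_mono_def)
qed

lemma se_cancel_left:
  assumes "psplit_epi X Z (B * A)" "phom X Y A" "phom Y Z B"
  shows "psplit_epi Y Z B"
proof -
  obtain r where r: "phom Z X r" "(B * A) * r = snd Z" using assms(1) by (auto simp: psplit_epi_def)
  note c = phomD[OF assms(2)] phomD[OF assms(3)] phomD[OF r(1)]
  have "B * (A * r) = snd Z" using r massoc[OF r(1) assms(2,3)] by simp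
  then show ?thesis using assms(3) phom_comp[OF r(1) assms(2)] by (auto simp: psplit_epi_def)
qed

lemma se_cancel_right:
  assumes "psplit_epi X Z (B * A)" "phom X Y A" "psplit_mono Y Z B"
  shows "psplit_epi X Y A"
proof -
  obtain r where r: "phom Z X r" "(B * A) * r = snd Z" using assms(1) by (auto simp: psplit_epi_def)
  obtain q where q: "phom Z Y q" "q * B = snd Y" using assms(3) by (auto simp: psplit_mono_def)
  have hB: "phom Y Z B" using assms by (auto simp: psplit_mono_def)
  note c = phomD[OF assms(2)] phomD[OF hB] phomD[OF r(1)] phomD[OF q(1)]
  have hrB: "phom Y X (r * B)" using phom_comp[OF hB r(1)] .
  have "A * (r * B) = snd Y * (A * (r * B))" using phomD(2)[OF phom_comp[OF hrB assms(2)]] by simp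
  also have "\<dots> = (q * B) * (A * (r * B))" using q by simp
  also have "\<dots> = q * (B * (A * (r * B)))" using massoc[OF phom_comp[OF hrB assms(2)] hB q(1)] by simp
  also have "B * (A * (r * B)) = ((B * A) * r) * B"
    using massoc[OF hrB assms(2) hB] massoc[OF hB r(1) phom_comp[OF assms(2) hB]] by simp
  also have "\<dots> = B" using r c by simp
  also have "q * B = snd Y" using q by simp
  finally show ?thesis using assms(2) phom_comp[OF hB r(1)] by (auto simp: psplit_epi_def)
qed

lemma transfer:
  assumes hf: "phom A B f" and hg: "phom A' B' g"
    and a1: "psplit_mono A A' a" and a2: "psplit_epi A A' a"
    and b1: "psplit_mono B B' b" and b2: "psplit_epi B B' b"
    and R: "pradhom A B' R" and eq: "g * a = b * f + R"
  shows "(psplit_mono A B f \<longleftrightarrow> psplit_mono A' B' g) \<and> (psplit_epi A B f \<longleftrightarrow> psplit_epi A' B' g)"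
proof -
  have ha: "phom A A' a" and hb: "phom B B' b" using a1 b1 by (auto simp: psplit_mono_def)
  have hR: "phom A B' R" using R pradhom_phom by blast
  note c = phomD[OF hf] phomD[OF hg] phomD[OF ha] phomD[OF hb] phomD[OF hR]
  have eq2: "b * f = g * a + - R"
  proof -
    have "b * f = (b * f + R) + - R" using c by (intro eq_matI) auto
    then show ?thesis using eq by simp
  qed
  have mR: "pradhom A B' (- R)" using rad_uminus[OF R] .
  have 1: "psplit_mono A' B' g" if "psplit_mono A B f"
    using sm_cancel_right[OF _ hg a2] sm_pert[OF sm_comp[OF that b1] R] eq by simp
  have 2: "psplit_epi A' B' g" if "psplit_epi A B f"
    using se_cancel_left[OF _ ha hg] se_pert[OF se_comp[OF that b2] R] eq by simp
  have 3: "psplit_mono A B f" if "psplit_mono A' B' g"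
    using sm_cancel_left[OF _ hf hb] sm_pert[OF sm_comp[OF a1 that] mR] eq2 by simp
  have 4: "psplit_epi A B f" if "psplit_epi A' B' g"
    using se_cancel_right[OF _ hf b1] se_pert[OF se_comp[OF a2 that] mR] eq2 by simp
  show ?thesis using 1 2 3 4 by blast
qed

lemma htpc_rad:
  assumes H: "htpc C D F G" and cC: "cplx J C" and cD: "cplx J D"
    and hF: "phom (fst C n) (fst D n) (F n)" and hG: "phom (fst C n) (fst D n) (G n)"
  shows "\<exists>\<rho>. pradhom (fst C n) (fst D n) \<rho> \<and> F n = G n + \<rho>"
proof -
  obtain s where s: "\<And>m. phom (fst C m) (fst D (m - 1)) (s m)"
    "\<And>m. F m - G m = snd D (m - 1) * s m + s (m + 1) * snd C m"
    using H by (auto simp: htpc_def)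
  have dD: "pradhom (fst D (n - 1)) (fst D n) (snd D (n - 1))"
    using cD unfolding cplx_def by (metis diff_add_cancel)
  have dC: "pradhom (fst C n) (fst C (n + 1)) (snd C n)" using cC by (simp add: cplx_def)
  have s2: "phom (fst C (n + 1)) (fst D n) (s (n + 1))" using s(1)[of "n+1"] by simp
  have r: "pradhom (fst C n) (fst D n) (snd D (n - 1) * s n + s (n + 1) * snd C n)"
    using rad_add[OF rad_comp_left[OF dD s(1)] rad_comp_right[OF dC s2]] .
  have "F n = G n + (F n - G n)" using phomD(1)[OF hF] phomD(1)[OF hG]
    by (intro eq_matI) auto
  then show ?thesis using r s(2) by metis
qed

lemma cplx_pobj: "cplx J C \<Longrightarrow> pobj (fst C n)"
  by (simp add: cplx_def pradhom_def phom_def)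

lemma kiso_iso:
  assumes K: "kiso J C D a"
  shows "psplit_mono (fst C n) (fst D n) (a n) \<and> psplit_epi (fst C n) (fst D n) (a n)"
proof -
  obtain b where b: "cmor J D C b" "htpc C C (ccomp b a) (cid C)" "htpc D D (ccomp a b) (cid D)"
    and ma: "cmor J C D a" using K by (auto simp: kiso_def)
  have cC: "cplx J C" and cD: "cplx J D" using ma by (auto simp: cmor_def)
  have ha: "phom (fst C n) (fst D n) (a n)" using ma by (simp add: cmor_def)
  have hb: "phom (fst D n) (fst C n) (b n)" using b by (simp add: cmor_def)
  have i1: "phom (fst C n) (fst C n) (cid C n)" using phom_id[OF cplx_pobj[OF cC]] by (simp add: cid_def)
  have i2: "phom (fst D n) (fst D n) (cid D n)" using phom_id[OF cplx_pobj[OF cD]] by (simp add: cid_def)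
  have j1: "phom (fst C n) (fst C n) (ccomp b a n)" using phom_comp[OF ha hb] by (simp add: ccomp_def)
  have j2: "phom (fst D n) (fst D n) (ccomp a b n)" using phom_comp[OF hb ha] by (simp add: ccomp_def)
  obtain \<rho> where r: "pradhom (fst C n) (fst C n) \<rho>" "b n * a n = snd (fst C n) + \<rho>"
    using htpc_rad[OF b(2) cC cC j1 i1] by (auto simp: ccomp_def cid_def)
  obtain \<rho>' where r': "pradhom (fst D n) (fst D n) \<rho>'" "a n * b n = snd (fst D n) + \<rho>'"
    using htpc_rad[OF b(3) cD cD j2 i2] by (auto simp: ccomp_def cid_def)
  obtain t where t: "phom (fst C n) (fst C n) t" "t * (snd (fst C n) + \<rho>) = snd (fst C n)"
    using rad_linv[OF r(1)] by blast
  obtain z where z: "phom (fst D n) (fst D n) z" "(snd (fst D n) + \<rho>') * z = snd (fst D n)"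
    using rad_rinv[OF r'(1)] by blast
  note c = phomD[OF ha] phomD[OF hb] phomD[OF t(1)] phomD[OF z(1)]
  have "(t * b n) * a n = snd (fst C n)" using t r massoc[OF ha hb t(1)] by simp
  moreover have "a n * (b n * z) = snd (fst D n)" using z r' massoc[OF z(1) hb ha] by simp
  ultimately show ?thesis using ha phom_comp[OF hb t(1)] phom_comp[OF z(1) hb]
    by (auto simp: psplit_mono_def psplit_epi_def)
qed


lemma cplxD:
  assumes "cplx J C"
  shows "pradhom (fst C n) (fst C (n + 1)) (snd C n)"
    "snd C (n + 1) * snd C n = 0\<^sub>m (fst (fst C (n + 2))) (fst (fst C n))"
    "n \<notin> J \<Longrightarrow> pmod (fst C n) = {0\<^sub>v (fst (fst C n))}"
  using assms by (auto simp: cplx_def)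

lemma cmorD:
  assumes "cmor J C D f"
  shows "cplx J C" "cplx J D" "phom (fst C n) (fst D n) (f n)"
    "snd D n * f n = f (n + 1) * snd C n"
  using assms by (auto simp: cmor_def)

lemma factor_lemma:
  assumes G: "cmor J X Y g" and iJ: "i \<in> J"
    and hk: "phom (fst X i) Z k" and hh: "phom Z (fst Y i) h"
    and gi: "g i = h * k" and irr: "cirr J X Y g"
  shows "psplit_mono (fst X i) Z k \<or> psplit_epi Z (fst Y i) h"
proof -
  have cX: "cplx J X" and cY: "cplx J Y" using G by (auto simp: cmor_def)
  define EO where "EO n = (if n < i then fst X n else if n = i then Z else fst Y n)" for n
  define ED where "ED n = (if n < i - 1 then snd X n else if n = i - 1 then k * snd X n
                           else if n = i then snd Y n * h else snd Y n)" for n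
  define E where "E = (EO, ED)"
  define k' where "k' n = (if n < i then snd (fst X n) else if n = i then k else g n)" for n
  define h' where "h' n = (if n < i then g n else if n = i then h else snd (fst Y n))" for n
  have dXi: "pradhom (fst X (i - 1)) (fst X i) (snd X (i - 1))"
    using cplxD(1)[OF cX, of "i - 1"] by simp
  have hdXi: "phom (fst X (i - 1)) (fst X i) (snd X (i - 1))" using pradhom_phom[OF dXi] .
  have hdYi: "phom (fst Y i) (fst Y (i + 1)) (snd Y i)" using pradhom_phom[OF cplxD(1)[OF cY]] .
  have hgi: "phom (fst X i) (fst Y i) (g i)" using cmorD(3)[OF G] .
  have hgi1: "phom (fst X (i - 1)) (fst Y (i - 1)) (g (i - 1))" using cmorD(3)[OF G] .
  have hgi2: "phom (fst X (i + 1)) (fst Y (i + 1)) (g (i + 1))" using cmorD(3)[OF G] .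
  have hdXi2: "phom (fst X i) (fst X (i + 1)) (snd X i)" using pradhom_phom[OF cplxD(1)[OF cX]] .
  have hdXi0: "phom (fst X (i - 2)) (fst X (i - 1)) (snd X (i - 2))"
    using pradhom_phom[OF cplxD(1)[OF cX, of "i - 2"]] by simp
  have hdYi3: "phom (fst Y (i + 1)) (fst Y (i + 2)) (snd Y (i + 1))"
    using pradhom_phom[OF cplxD(1)[OF cY, of "i + 1"]] by (simp add: add.assoc)
  have cE: "cplx J E"
    unfolding cplx_def E_def fst_conv snd_conv
  proof (intro conjI allI impI)
    fix n
    consider "n < i - 1" | "n = i - 1" | "n = i" | "n > i" by linarith
    then show "pradhom (EO n) (EO (n + 1)) (ED n)"
    proof cases
      case 1 then show ?thesis using cplxD(1)[OF cX, of n] by (simp add: EO_def ED_def)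
    next
      case 2 then show ?thesis using rad_comp_right[OF dXi hk] by (simp add: EO_def ED_def)
    next
      case 3 then show ?thesis using rad_comp_left[OF cplxD(1)[OF cY, of i] hh] by (simp add: EO_def ED_def)
    next
      case 4 then show ?thesis using cplxD(1)[OF cY, of n] by (simp add: EO_def ED_def)
    qed
  next
    fix n
    consider "n < i - 2" | "n = i - 2" | "n = i - 1" | "n = i" | "n > i" by linarith
    then show "ED (n + 1) * ED n = 0\<^sub>m (fst (EO (n + 2))) (fst (EO n))"
    proof cases
      case 1 then show ?thesis using cplxD(2)[OF cX, of n] by (simp add: EO_def ED_def)
    next
      case 2
      have "ED (n + 1) * ED n = (k * snd X (i - 1)) * snd X (i - 2)"
        using 2 by (simp add: EO_def ED_def)
      also have "\<dots> = k * (snd X (i - 1) * snd X (i - 2))" using massoc[OF hdXi0 hdXi hk] by simp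
      also have "snd X (i - 1) * snd X (i - 2) = 0\<^sub>m (fst (fst X i)) (fst (fst X (i - 2)))"
        using cplxD(2)[OF cX, of "i - 2"] by simp
      also have "k * \<dots> = 0\<^sub>m (fst Z) (fst (fst X (i - 2)))"
        using phomD(1)[OF hk] by simp
      finally show ?thesis using 2 by (simp add: EO_def)
    next
      case 3
      have "ED (n + 1) * ED n = (snd Y i * h) * (k * snd X (i - 1))"
        using 3 by (simp add: EO_def ED_def)
      also have "\<dots> = snd Y i * ((h * k) * snd X (i - 1))"
        using massoc[OF hdXi hk phom_comp[OF hh hdYi]] massoc[OF hdXi phom_comp[OF hk hh] hdYi]
          massoc[OF hk hh hdYi] by simp
      also have "\<dots> = (snd Y i * g i) * snd X (i - 1)"
        using gi massoc[OF hdXi hgi hdYi] by simp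
      also have "\<dots> = (g (i + 1) * snd X i) * snd X (i - 1)" using cmorD(4)[OF G, of i] by simp
      also have "\<dots> = g (i + 1) * (snd X i * snd X (i - 1))" using massoc[OF hdXi hdXi2 hgi2] by simp
      also have "snd X i * snd X (i - 1) = 0\<^sub>m (fst (fst X (i + 1))) (fst (fst X (i - 1)))"
        using cplxD(2)[OF cX, of "i - 1"] by (simp add: add.commute)
      also have "g (i + 1) * \<dots> = 0\<^sub>m (fst (fst Y (i + 1))) (fst (fst X (i - 1)))"
        using phomD(1)[OF hgi2] by simp
      finally show ?thesis using 3 by (simp add: EO_def add.commute)
    next
      case 4
      have "ED (n + 1) * ED n = snd Y (i + 1) * (snd Y i * h)"
        using 4 by (simp add: EO_def ED_def)
      also have "\<dots> = (snd Y (i + 1) * snd Y i) * h" using massoc[OF hh hdYi hdYi3] by simp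
      also have "snd Y (i + 1) * snd Y i = 0\<^sub>m (fst (fst Y (i + 2))) (fst (fst Y i))"
        using cplxD(2)[OF cY, of i] by simp
      also have "\<dots> * h = 0\<^sub>m (fst (fst Y (i + 2))) (fst Z)"
        using phomD(1)[OF hh] by simp
      finally show ?thesis using 4 by (simp add: EO_def)
    next
      case 5 then show ?thesis using cplxD(2)[OF cY, of n] by (simp add: EO_def ED_def)
    qed
  next
    fix n assume "n \<notin> J"
    then show "pmod (EO n) = {0\<^sub>v (fst (EO n))}"
      using iJ cplxD(3)[OF cX] cplxD(3)[OF cY] by (auto simp: EO_def)
  qed
  have K: "cmor J X E k'"
    unfolding cmor_def
  proof (intro conjI allI cX cE)
    fix n
    show "phom (fst X n) (fst E n) (k' n)"
      using phom_id[OF cplx_pobj[OF cX]] hk cmorD(3)[OF G, of n]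
      by (auto simp: E_def EO_def k'_def)
    consider "n < i - 1" | "n = i - 1" | "n = i" | "n > i" by linarith
    then show "snd E n * k' n = k' (n + 1) * snd X n"
    proof cases
      case 1
      have h1: "phom (fst X n) (fst X (n + 1)) (snd X n)" using pradhom_phom[OF cplxD(1)[OF cX]] .
      show ?thesis using 1 phomD(2,3)[OF h1] by (simp add: E_def ED_def k'_def)
    next
      case 2
      have "snd E n * k' n = (k * snd X (i - 1)) * snd (fst X (i - 1))"
        using 2 by (simp add: E_def ED_def k'_def)
      also have "\<dots> = k * snd X (i - 1)" using massoc[OF phom_id[OF phomD(6)[OF hdXi]] hdXi hk] phomD(3)[OF hdXi] by simp
      finally show ?thesis using 2 by (simp add: k'_def)
    next
      case 3
      have "snd E n * k' n = (snd Y i * h) * k" using 3 by (simp add: E_def ED_def k'_def)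
      also have "\<dots> = snd Y i * g i" using massoc[OF hk hh hdYi] gi by simp
      also have "\<dots> = g (i + 1) * snd X i" using cmorD(4)[OF G] .
      finally show ?thesis using 3 by (simp add: k'_def)
    next
      case 4 then show ?thesis using cmorD(4)[OF G, of n] by (simp add: E_def ED_def k'_def)
    qed
  qed
  have H: "cmor J E Y h'"
    unfolding cmor_def
  proof (intro conjI allI cY cE)
    fix n
    show "phom (fst E n) (fst Y n) (h' n)"
      using phom_id[OF cplx_pobj[OF cY]] hh cmorD(3)[OF G, of n]
      by (auto simp: E_def EO_def h'_def)
    consider "n < i - 1" | "n = i - 1" | "n = i" | "n > i" by linarith
    then show "snd Y n * h' n = h' (n + 1) * snd E n"
    proof cases
      case 1 then show ?thesis using cmorD(4)[OF G, of n] by (simp add: E_def ED_def h'_def)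
    next
      case 2
      have "h' (n + 1) * snd E n = h * (k * snd X (i - 1))" using 2 by (simp add: E_def ED_def h'_def)
      also have "\<dots> = g i * snd X (i - 1)" using massoc[OF hdXi hk hh] gi by simp
      also have "\<dots> = snd Y (i - 1) * g (i - 1)" using cmorD(4)[OF G, of "i - 1"] by simp
      finally show ?thesis using 2 by (simp add: h'_def)
    next
      case 3
      have "h' (n + 1) * snd E n = snd (fst Y (i + 1)) * (snd Y i * h)"
        using 3 by (simp add: E_def ED_def h'_def)
      also have "\<dots> = snd Y i * h" using phomD(2)[OF phom_comp[OF hh hdYi]] .
      finally show ?thesis using 3 by (simp add: h'_def)
    next
      case 4
      have h1: "phom (fst Y n) (fst Y (n + 1)) (snd Y n)" using pradhom_phom[OF cplxD(1)[OF cY]] .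
      show ?thesis using 4 phomD(2,3)[OF h1] by (simp add: E_def ED_def h'_def)
    qed
  qed
  have gc: "g = ccomp h' k'"
  proof
    fix n
    show "g n = ccomp h' k' n"
      using gi phomD(2,3)[OF cmorD(3)[OF G, of n]]
      by (auto simp: ccomp_def h'_def k'_def)
  qed
  have "csplit_mono J X E k' \<or> csplit_epi J E Y h'"
    using irr K H gc unfolding cirr_def by blast
  then show ?thesis
  proof
    assume "csplit_mono J X E k'"
    then obtain r where r: "cmor J E X r" "ccomp r k' = cid X" by (auto simp: csplit_mono_def)
    have "phom Z (fst X i) (r i)" using cmorD(3)[OF r(1), of i] by (simp add: E_def EO_def)
    moreover have "r i * k = snd (fst X i)" using fun_cong[OF r(2), of i] by (simp add: ccomp_def cid_def k'_def)
    ultimately show ?thesis using hk by (auto simp: psplit_mono_def)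
  next
    assume "csplit_epi J E Y h'"
    then obtain r where r: "cmor J Y E r" "ccomp h' r = cid Y" by (auto simp: csplit_epi_def)
    have "phom (fst Y i) Z (r i)" using cmorD(3)[OF r(1), of i] by (simp add: E_def EO_def)
    moreover have "h * r i = snd (fst Y i)" using fun_cong[OF r(2), of i] by (simp add: ccomp_def cid_def h'_def)
    ultimately show ?thesis using hh by (auto simp: psplit_epi_def)
  qed
qed


lemma zero_obj_sm:
  assumes hA: "phom X0 Y0 A" and z: "pmod X0 = {0\<^sub>v (fst X0)}"
  shows "psplit_mono X0 Y0 A"
proof -
  have pX: "pobj X0" and pY: "pobj Y0" using hA by (auto simp: phom_def)
  have ce: "snd X0 \<in> carrier_mat (fst X0) (fst X0)" using pX by (simp add: pobj_def)
  have e0: "snd X0 = 0\<^sub>m (fst X0) (fst X0)"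
  proof (rule eq_matI)
    fix i j assume i: "i < dim_row (0\<^sub>m (fst X0) (fst X0) :: 'a mat)" and j: "j < dim_col (0\<^sub>m (fst X0) (fst X0) :: 'a mat)"
    have "col (snd X0) j \<in> pmod X0" using col_pmod[OF pX] j by simp
    then have "col (snd X0) j = 0\<^sub>v (fst X0)" using z by simp
    then have "col (snd X0) j $ i = 0" using i by simp
    then show "snd X0 $$ (i, j) = 0\<^sub>m (fst X0) (fst X0) $$ (i, j)" using i j ce by simp
  qed (use ce in auto)
  have h0: "phom Y0 X0 (0\<^sub>m (fst X0) (fst Y0))"
    using pX pY e0 by (auto simp: phom_def pobj_def)
  have "0\<^sub>m (fst X0) (fst Y0) * A = snd X0" using e0 phomD(1)[OF hA] by simp
  then show ?thesis using hA h0 by (auto simp: psplit_mono_def)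
qed

theorem lemma2:
  fixes emb :: "'k::field \<Rightarrow> 'a::ring_1" and J :: "int set"
    and X Y X' Y' :: "'a cplx" and f g \<alpha> \<beta> :: "int \<Rightarrow> 'a mat"
  assumes "fd_nonss_algebra emb" and "interval J"
    and "cmor J X Y f" and "cmor J X' Y' g"
    and "kiso J X X' \<alpha>" and "kiso J Y Y' \<beta>"
    and "htpc X Y' (ccomp g \<alpha>) (ccomp \<beta> f)"
  shows "(smonic X Y f \<longrightarrow> smonic X' Y' g)
       \<and> (sepic X Y f \<longrightarrow> sepic X' Y' g)
       \<and> (cirr J X Y f \<and> cirr J X' Y' g \<and> sirreducible X Y f \<longrightarrow> sirreducible X' Y' g)"
proof -
  note F = assms(3) and G = assms(4)
  have cX: "cplx J X" and cY: "cplx J Y" using cmorD[OF F] by auto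
  have cX': "cplx J X'" and cY': "cplx J Y'" using cmorD[OF G] by auto
  have pt: "(psplit_mono (fst X n) (fst Y n) (f n) \<longleftrightarrow> psplit_mono (fst X' n) (fst Y' n) (g n))
      \<and> (psplit_epi (fst X n) (fst Y n) (f n) \<longleftrightarrow> psplit_epi (fst X' n) (fst Y' n) (g n))" for n
  proof -
    have hf: "phom (fst X n) (fst Y n) (f n)" using cmorD(3)[OF F] .
    have hg: "phom (fst X' n) (fst Y' n) (g n)" using cmorD(3)[OF G] .
    note ai = kiso_iso[OF assms(5), of n] and bi = kiso_iso[OF assms(6), of n]
    have ha: "phom (fst X n) (fst X' n) (\<alpha> n)" using ai by (auto simp: psplit_mono_def)
    have hb: "phom (fst Y n) (fst Y' n) (\<beta> n)" using bi by (auto simp: psplit_mono_def)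
    have j1: "phom (fst X n) (fst Y' n) (ccomp g \<alpha> n)" using phom_comp[OF ha hg] by (simp add: ccomp_def)
    have j2: "phom (fst X n) (fst Y' n) (ccomp \<beta> f n)" using phom_comp[OF hf hb] by (simp add: ccomp_def)
    obtain \<rho> where r: "pradhom (fst X n) (fst Y' n) \<rho>" "g n * \<alpha> n = \<beta> n * f n + \<rho>"
      using htpc_rad[OF assms(7) cX cY' j1 j2] by (auto simp: ccomp_def)
    show ?thesis using transfer[OF hf hg _ _ _ _ r(1) r(2)] ai bi by blast
  qed
  have a: "smonic X Y f \<longrightarrow> smonic X' Y' g" using pt by (auto simp: smonic_def)
  have b: "sepic X Y f \<longrightarrow> sepic X' Y' g" using pt by (auto simp: sepic_def)
  have c: "sirreducible X' Y' g" if irg: "cirr J X' Y' g" and sf: "sirreducible X Y f"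
  proof -
    obtain i0 where i0: "pirr (fst X i0) (fst Y i0) (f i0)"
      "\<forall>n<i0. psplit_epi (fst X n) (fst Y n) (f n)"
      "\<forall>n>i0. psplit_mono (fst X n) (fst Y n) (f n)"
      using sf by (auto simp: sirreducible_def)
    have lo: "\<forall>n<i0. psplit_epi (fst X' n) (fst Y' n) (g n)" using i0(2) pt by blast
    have hi: "\<forall>n>i0. psplit_mono (fst X' n) (fst Y' n) (g n)" using i0(3) pt by blast
    have nsm: "\<not> psplit_mono (fst X' i0) (fst Y' i0) (g i0)" using i0(1) pt by (auto simp: pirr_def)
    have nse: "\<not> psplit_epi (fst X' i0) (fst Y' i0) (g i0)" using i0(1) pt by (auto simp: pirr_def)
    have iJ: "i0 \<in> J"
    proof (rule ccontr)
      assume "i0 \<notin> J"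
      then have "pmod (fst X i0) = {0\<^sub>v (fst (fst X i0))}" using cplxD(3)[OF cX] by blast
      then have "psplit_mono (fst X i0) (fst Y i0) (f i0)" using zero_obj_sm cmorD(3)[OF F] by blast
      then show False using i0(1) by (auto simp: pirr_def)
    qed
    have pg: "pirr (fst X' i0) (fst Y' i0) (g i0)"
      unfolding pirr_def
    proof (intro conjI nsm nse allI impI)
      show "phom (fst X' i0) (fst Y' i0) (g i0)" using cmorD(3)[OF G] .
      fix Z k h assume "phom (fst X' i0) Z k \<and> phom Z (fst Y' i0) h \<and> g i0 = h * k"
      then show "psplit_mono (fst X' i0) Z k \<or> psplit_epi Z (fst Y' i0) h"
        using factor_lemma[OF G iJ _ _ _ irg] by blast
    qed
    have un: "\<forall>n. pirr (fst X' n) (fst Y' n) (g n) \<longrightarrow> n = i0"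
    proof (intro allI impI)
      fix n assume p: "pirr (fst X' n) (fst Y' n) (g n)"
      show "n = i0"
      proof (rule ccontr)
        assume "n \<noteq> i0"
        then have "n < i0 \<or> n > i0" by linarith
        then show False using p lo hi by (auto simp: pirr_def)
      qed
    qed
    show ?thesis unfolding sirreducible_def using pg un lo hi by blast
  qed
  show ?thesis using a b c by blast
qed

end
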